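(* The truncated welfare-based dynamic posted-price (TWDPP) mechanism is ex post incentive compatible for myopic bidders and dominant-strategy incentive compatible for myopic miners.
   Context: Dynamic posted-price setting: at each time step a block with $m$ slots is produced by an active miner; $n$ bidders with private values $v_i\ge0$ submit bids $b_i$, each participating once. Given the current posted price $q>0$, $M(q)=\{i:b_i\ge q\}$; a block is $B\subseteq M(q)$ with $|B|\le m$; each $i\in B$ gets a slot and pays $q$. The TWDPP mechanism uses the random maximal (RM) allocation rule — $B$ is chosen uniformly at random among subsets of $M(q)$ of size $\min\{m,|M(q)|\}$ — and the update rule $T_{TW}(q,B)=\alpha\frac1m\sum_{i\in B}\min\{b_i,(1+\delta)q\}+(1-\alpha)q$ if $|B|<m$, and $\alpha(1+\delta)q+(1-\alpha)q$ if $|B|=m$, with $\alpha\in(0,1)$, $\delta\in(0,\infty)$. A myopic bidder's utility is $v_i-q$ if included and $0$ otherwise (in expectation over allocation randomness); ex post IC for myopic bidders means that, when the miner follows the RM rule, bidding $b_i=v_i$ weakly dominates every other bid for all bids of others. A myopic miner's utility is the total payment $q|B|$ in the current block; DSIC for myopic miners means following the RM rule is a weakly dominant, utility-maximizing strategy for the miner for all bids. *)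

theory Defs
  imports "HOL-Probability.Probability"
begin

text \<open>Bidders are the elements of a finite set N (so n = card N); a bid profile is
  b :: 'a => real.  The current posted price is q, the block size is m.\<close>

definition Mset :: "'a set \<Rightarrow> ('a \<Rightarrow> real) \<Rightarrow> real \<Rightarrow> 'a set" where
  "Mset N b q = {i \<in> N. b i \<ge> q}"

definition feasible_block :: "nat \<Rightarrow> 'a set \<Rightarrow> ('a \<Rightarrow> real) \<Rightarrow> real \<Rightarrow> 'a set \<Rightarrow> bool" where
  "feasible_block m N b q B \<longleftrightarrow> B \<subseteq> Mset N b q \<and> card B \<le> m"

definition RM_alloc :: "nat \<Rightarrow> 'a set \<Rightarrow> ('a \<Rightarrow> real) \<Rightarrow> real \<Rightarrow> 'a set pmf" where
  "RM_alloc m N b q =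
     pmf_of_set {B. B \<subseteq> Mset N b q \<and> card B = min m (card (Mset N b q))}"

definition TW_update :: "nat \<Rightarrow> real \<Rightarrow> real \<Rightarrow> ('a \<Rightarrow> real) \<Rightarrow> real \<Rightarrow> 'a set \<Rightarrow> real" where
  "TW_update m \<alpha> \<delta> b q B =
     (if card B < m
      then \<alpha> * (1 / real m) * (\<Sum>i\<in>B. min (b i) ((1 + \<delta>) * q)) + (1 - \<alpha>) * q
      else \<alpha> * (1 + \<delta>) * q + (1 - \<alpha>) * q)"

type_synonym 'a dpp_mech =
  "(nat \<Rightarrow> 'a set \<Rightarrow> ('a \<Rightarrow> real) \<Rightarrow> real \<Rightarrow> 'a set pmf) \<times>
   (nat \<Rightarrow> ('a \<Rightarrow> real) \<Rightarrow> real \<Rightarrow> 'a set \<Rightarrow> real)"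

definition TWDPP :: "real \<Rightarrow> real \<Rightarrow> 'a dpp_mech" where
  "TWDPP \<alpha> \<delta> = (RM_alloc, \<lambda>m. TW_update m \<alpha> \<delta>)"

definition alloc_rule :: "'a dpp_mech \<Rightarrow> nat \<Rightarrow> 'a set \<Rightarrow> ('a \<Rightarrow> real) \<Rightarrow> real \<Rightarrow> 'a set pmf" where
  "alloc_rule M = fst M"

definition bidder_utility ::
  "'a dpp_mech \<Rightarrow> nat \<Rightarrow> 'a set \<Rightarrow> ('a \<Rightarrow> real) \<Rightarrow> real \<Rightarrow> 'a \<Rightarrow> real \<Rightarrow> real" where
  "bidder_utility Mech m N b q i v =
     measure_pmf.expectation (alloc_rule Mech m N b q) (\<lambda>B. if i \<in> B then v - q else 0)"

definition ex_post_IC_myopic_bidders :: "'a dpp_mech \<Rightarrow> nat \<Rightarrow> 'a set \<Rightarrow> real \<Rightarrow> bool" where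
  "ex_post_IC_myopic_bidders Mech m N q \<longleftrightarrow>
     (\<forall>i\<in>N. \<forall>v::real. \<forall>b::'a \<Rightarrow> real. \<forall>b'::real. v \<ge> 0 \<longrightarrow>
        bidder_utility Mech m N (b(i := b')) q i v \<le> bidder_utility Mech m N (b(i := v)) q i v)"

definition miner_utility :: "real \<Rightarrow> 'a set \<Rightarrow> real" where
  "miner_utility q B = q * real (card B)"

definition DSIC_myopic_miner :: "'a dpp_mech \<Rightarrow> nat \<Rightarrow> 'a set \<Rightarrow> real \<Rightarrow> bool" where
  "DSIC_myopic_miner Mech m N q \<longleftrightarrow>
     (\<forall>b::'a \<Rightarrow> real.
        (\<forall>B\<in>set_pmf (alloc_rule Mech m N b q). feasible_block m N b q B) \<and>
        (\<forall>B'. feasible_block m N b q B' \<longrightarrow>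
           miner_utility q B' \<le> measure_pmf.expectation (alloc_rule Mech m N b q) (miner_utility q)))"

end

theory Submission
  imports Defs
begin

lemma S_fin_ne:
  assumes "finite N"
  shows "finite {B. B \<subseteq> Mset N b q \<and> card B = min m (card (Mset N b q))}"
    and "{B. B \<subseteq> Mset N b q \<and> card B = min m (card (Mset N b q))} \<noteq> {}"
proof -
  have fM: "finite (Mset N b q)" using assms by (simp add: Mset_def)
  show "finite {B. B \<subseteq> Mset N b q \<and> card B = min m (card (Mset N b q))}"
    by (rule finite_subset[of _ "Pow (Mset N b q)"]) (use fM in auto)
  obtain B where "B \<subseteq> Mset N b q" "card B = min m (card (Mset N b q))"
    using obtain_subset_with_card_n[of "min m (card (Mset N b q))" "Mset N b q"] by auto
  then show "{B. B \<subseteq> Mset N b q \<and> card B = min m (card (Mset N b q))} \<noteq> {}" by blast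
qed

lemma alloc_TW: "alloc_rule (TWDPP \<alpha> \<delta>) = RM_alloc"
  by (simp add: alloc_rule_def TWDPP_def)

lemma util_eq:
  assumes "finite N"
  shows "bidder_utility (TWDPP \<alpha> \<delta>) m N b q i v =
    (\<Sum>B\<in>{B. B \<subseteq> Mset N b q \<and> card B = min m (card (Mset N b q))}. (if i \<in> B then v - q else 0))
     / card {B. B \<subseteq> Mset N b q \<and> card B = min m (card (Mset N b q))}"
  unfolding bidder_utility_def alloc_TW RM_alloc_def
  using S_fin_ne[OF assms, of b q m] by (simp add: integral_pmf_of_set)

theorem mainTheorem7:
  fixes N :: "'a set" and m :: nat and q \<alpha> \<delta> :: real
  assumes "finite N" and "m \<ge> 1" and "q > 0"
    and "0 < \<alpha>" and "\<alpha> < 1" and "0 < \<delta>"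
  shows "ex_post_IC_myopic_bidders (TWDPP \<alpha> \<delta>) m N q \<and> DSIC_myopic_miner (TWDPP \<alpha> \<delta>) m N q"
proof
  show "ex_post_IC_myopic_bidders (TWDPP \<alpha> \<delta>) m N q"
    unfolding ex_post_IC_myopic_bidders_def
  proof (intro ballI allI impI)
    fix i v b b' assume iN: "i \<in> N" and v0: "(0::real) \<le> v"
    let ?U = "\<lambda>c. bidder_utility (TWDPP \<alpha> \<delta>) m N (b(i := c)) q i v"
    have zero: "?U c = 0" if "c < q" for c
    proof -
      have "i \<notin> Mset N (b(i := c)) q" using that by (simp add: Mset_def)
      hence "(\<Sum>B\<in>{B. B \<subseteq> Mset N (b(i := c)) q \<and> card B = min m (card (Mset N (b(i := c)) q))}.
              (if i \<in> B then v - q else 0)) = 0"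
        by (intro sum.neutral) auto
      thus ?thesis by (simp add: util_eq[OF assms(1)])
    qed
    show "?U b' \<le> ?U v"
    proof (cases "v \<ge> q")
      case True
      show ?thesis
      proof (cases "b' \<ge> q")
        case True
        have "Mset N (b(i := b')) q = Mset N (b(i := v)) q"
          using True \<open>v \<ge> q\<close> by (auto simp: Mset_def)
        thus ?thesis by (simp add: util_eq[OF assms(1)])
      next
        case False
        have "0 \<le> ?U v" unfolding util_eq[OF assms(1)]
          using True by (intro divide_nonneg_nonneg sum_nonneg) auto
        thus ?thesis using zero[of b'] False by simp
      qed
    next
      case False
      have "?U b' \<le> 0" unfolding util_eq[OF assms(1)]
        using False by (intro divide_nonpos_nonneg sum_nonpos) auto
      thus ?thesis using zero[of v] False by simp
    qed
  qed
next
  show "DSIC_myopic_miner (TWDPP \<alpha> \<delta>) m N q"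
    unfolding DSIC_myopic_miner_def
  proof (intro allI conjI ballI impI)
    fix b
    let ?M = "Mset N b q"
    let ?S = "{B. B \<subseteq> ?M \<and> card B = min m (card ?M)}"
    have fin: "finite ?S" and ne: "?S \<noteq> {}" using S_fin_ne[OF assms(1)] by auto
    have sp: "set_pmf (alloc_rule (TWDPP \<alpha> \<delta>) m N b q) = ?S"
      unfolding alloc_TW RM_alloc_def using fin ne by simp
    show "feasible_block m N b q B" if "B \<in> set_pmf (alloc_rule (TWDPP \<alpha> \<delta>) m N b q)" for B
      using that unfolding sp feasible_block_def by auto
    have E: "measure_pmf.expectation (alloc_rule (TWDPP \<alpha> \<delta>) m N b q) (miner_utility q)
        = q * real (min m (card ?M))"
    proof -
      have "measure_pmf.expectation (alloc_rule (TWDPP \<alpha> \<delta>) m N b q) (miner_utility q)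
          = (\<Sum>B\<in>?S. miner_utility q B) / card ?S"
        unfolding alloc_TW RM_alloc_def using fin ne by (simp add: integral_pmf_of_set)
      also have "(\<Sum>B\<in>?S. miner_utility q B) = (\<Sum>B\<in>?S. q * real (min m (card ?M)))"
        by (intro sum.cong) (auto simp: miner_utility_def)
      also have "\<dots> / card ?S = q * real (min m (card ?M))"
        using fin ne by simp
      finally show ?thesis .
    qed
    fix B' assume "feasible_block m N b q B'"
    hence "B' \<subseteq> ?M" "card B' \<le> m" by (auto simp: feasible_block_def)
    moreover have "finite ?M" using assms(1) by (simp add: Mset_def)
    ultimately have "card B' \<le> min m (card ?M)" by (simp add: card_mono)
    thus "miner_utility q B' \<le> measure_pmf.expectation (alloc_rule (TWDPP \<alpha> \<delta>) m N b q) (miner_utility q)"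
      unfolding E miner_utility_def using assms(3) by (simp add: mult_left_mono)
  qed
qed

end
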